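(* Let $\epsilon>0$, $\chi>0$, $s\in\mathbb{R}$, and let $(U,V)$ be a traveling pulse profile of $u_t=(\epsilon u_x-\chi u\phi(v_x))_x$, $\epsilon v_t=v_{xx}+u-g(v)$ with speed $s$, such that the entries of $D,M,N$ below are bounded continuous on $\mathbb{R}$. Let $\mathcal{L}_0=D(\xi)\partial_{\xi\xi}$ and $\mathcal{L}_1=M(\xi)\partial_\xi+N(\xi)I$ on $X=BUC(\mathbb{R};\mathbb{R}^2)$. Then for $\lambda\in\mathbb{C}$ with $\operatorname{Re}\lambda>0$ sufficiently large, $\|\mathcal{L}_1(\mathcal{L}_0-\lambda I)^{-1}\|<1$.
   Context: $D=\begin{pmatrix}\epsilon & -\chi U\phi'(V')\\ 0 & 1/\epsilon\end{pmatrix}$, $M=\begin{pmatrix}s-\chi\phi(V') & -\chi(U\phi'(V'))'\\ 0 & s\end{pmatrix}$, $N=\begin{pmatrix}-\chi(\phi(V'))' & 0\\ 1/\epsilon & -g'(V)/\epsilon\end{pmatrix}$; $BUC$ is the space of bounded uniformly continuous functions with sup norm (complexified), and $\mathcal{L}_0$ has domain $BUC^2$. *)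

theory Defs
  imports "HOL-Analysis.Analysis"
begin

text \<open>Functions R -> C^2 are modelled as real => complex * complex
  (norm on C^2 = Euclidean norm of the product type).\<close>

definition buc :: "(real \<Rightarrow> complex \<times> complex) \<Rightarrow> bool" where
  "buc f \<longleftrightarrow> bounded (range f) \<and> uniformly_continuous_on UNIV f"

definition buc2 :: "(real \<Rightarrow> complex \<times> complex) \<Rightarrow> bool" where
  "buc2 u \<longleftrightarrow> (\<exists>u1 u2. (\<forall>x. (u has_vector_derivative u1 x) (at x)) \<and>
      (\<forall>x. (u1 has_vector_derivative u2 x) (at x)) \<and> buc u \<and> buc u1 \<and> buc u2)"

definition supn :: "(real \<Rightarrow> complex \<times> complex) \<Rightarrow> real" where
  "supn f = (SUP x. norm (f x))"

definition mat_app :: "real \<Rightarrow> real \<Rightarrow> real \<Rightarrow> real \<Rightarrow> complex \<times> complex \<Rightarrow> complex \<times> complex" where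
  "mat_app a b c d w = (of_real a * fst w + of_real b * snd w, of_real c * fst w + of_real d * snd w)"

text \<open>Traveling pulse profile (U,V) with speed s of
  u_t = (eps u_x - chi u phi(v_x))_x, eps v_t = v_xx + u - g(v), i.e. with u = U(x - s t), v = V(x - s t):
  -s U' = (eps U' - chi U phi(V'))',  -eps s V' = V'' + U - g(V),
  and U, V converge to the same limits at both ends (homoclinic/pulse).\<close>
definition traveling_pulse ::
  "real \<Rightarrow> real \<Rightarrow> (real \<Rightarrow> real) \<Rightarrow> (real \<Rightarrow> real) \<Rightarrow> real \<Rightarrow> (real \<Rightarrow> real) \<Rightarrow> (real \<Rightarrow> real) \<Rightarrow> bool" where
  "traveling_pulse eps chi phi g s U V \<longleftrightarrow>
     (\<forall>x. U differentiable at x) \<and> (\<forall>x. V differentiable at x) \<and>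
     (\<forall>x. deriv V differentiable at x) \<and>
     (\<forall>x. (\<lambda>y. eps * deriv U y - chi * U y * phi (deriv V y)) differentiable at x) \<and>
     (\<forall>x. - s * deriv U x = deriv (\<lambda>y. eps * deriv U y - chi * U y * phi (deriv V y)) x) \<and>
     (\<forall>x. - eps * s * deriv V x = deriv (deriv V) x + U x - g (V x)) \<and>
     (\<exists>Us Vs. (U \<longlongrightarrow> Us) at_top \<and> (U \<longlongrightarrow> Us) at_bot \<and>
              (V \<longlongrightarrow> Vs) at_top \<and> (V \<longlongrightarrow> Vs) at_bot)"

definition cscale :: "complex \<Rightarrow> complex \<times> complex \<Rightarrow> complex \<times> complex" where
  "cscale c w = (c * fst w, c * snd w)"

definition D11 :: "real \<Rightarrow> real" where "D11 eps = eps"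
definition D12 :: "real \<Rightarrow> (real \<Rightarrow> real) \<Rightarrow> (real \<Rightarrow> real) \<Rightarrow> (real \<Rightarrow> real) \<Rightarrow> real \<Rightarrow> real" where
  "D12 chi phi U V x = - chi * U x * deriv phi (deriv V x)"
definition D22 :: "real \<Rightarrow> real" where "D22 eps = 1 / eps"

definition M11 :: "real \<Rightarrow> (real \<Rightarrow> real) \<Rightarrow> real \<Rightarrow> (real \<Rightarrow> real) \<Rightarrow> real \<Rightarrow> real" where
  "M11 chi phi s V x = s - chi * phi (deriv V x)"
definition M12 :: "real \<Rightarrow> (real \<Rightarrow> real) \<Rightarrow> (real \<Rightarrow> real) \<Rightarrow> (real \<Rightarrow> real) \<Rightarrow> real \<Rightarrow> real" where
  "M12 chi phi U V x = - chi * deriv (\<lambda>y. U y * deriv phi (deriv V y)) x"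

definition N11 :: "real \<Rightarrow> (real \<Rightarrow> real) \<Rightarrow> (real \<Rightarrow> real) \<Rightarrow> real \<Rightarrow> real" where
  "N11 chi phi V x = - chi * deriv (\<lambda>y. phi (deriv V y)) x"
definition N22 :: "real \<Rightarrow> (real \<Rightarrow> real) \<Rightarrow> (real \<Rightarrow> real) \<Rightarrow> real \<Rightarrow> real" where
  "N22 eps g V x = - deriv g (V x) / eps"

definition bdd_cont :: "(real \<Rightarrow> real) \<Rightarrow> bool" where
  "bdd_cont h \<longleftrightarrow> bounded (range h) \<and> continuous_on UNIV h"

definition L0 :: "real \<Rightarrow> real \<Rightarrow> (real \<Rightarrow> real) \<Rightarrow> (real \<Rightarrow> real) \<Rightarrow> (real \<Rightarrow> real)
   \<Rightarrow> (real \<Rightarrow> complex \<times> complex) \<Rightarrow> real \<Rightarrow> complex \<times> complex" where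
  "L0 eps chi phi U V u x = mat_app (D11 eps) (D12 chi phi U V x) 0 (D22 eps)
      (vector_derivative (\<lambda>y. vector_derivative u (at y)) (at x))"

definition L1 :: "real \<Rightarrow> real \<Rightarrow> (real \<Rightarrow> real) \<Rightarrow> (real \<Rightarrow> real) \<Rightarrow> real \<Rightarrow> (real \<Rightarrow> real) \<Rightarrow> (real \<Rightarrow> real)
   \<Rightarrow> (real \<Rightarrow> complex \<times> complex) \<Rightarrow> real \<Rightarrow> complex \<times> complex" where
  "L1 eps chi phi g s U V u x =
     mat_app (M11 chi phi s V x) (M12 chi phi U V x) 0 s (vector_derivative u (at x))
   + mat_app (N11 chi phi V x) 0 (1 / eps) (N22 eps g V x) (u x)"

end

theory Submission
  imports Defs
begin


lemma integrable_expg: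
  fixes g :: "real \<Rightarrow> complex"
  assumes k: "0 < Re k" and g: "continuous_on UNIV g" and B: "\<forall>x. norm (g x) \<le> B"
  shows "(\<lambda>y. exp (- (k * of_real y)) * g y) integrable_on {c..}"
proof (rule measurable_bounded_by_integrable_imp_integrable)
  show "(\<lambda>y. exp (- (k * of_real y)) * g y) \<in> borel_measurable (lebesgue_on {c..})"
    by (rule continuous_imp_measurable_on_sets_lebesgue) (auto intro!: continuous_intros continuous_on_subset[OF g])
  show "(\<lambda>x. B * exp (- Re k * x)) integrable_on {c..}"
    using has_integral_mult_right[OF has_integral_exp_minus_to_infinity[OF k, of c], of B] by (auto simp: integrable_on_def)
  show "norm (exp (- (k * of_real x)) * g x) \<le> B * exp (- Re k * x)" if "x \<in> {c..}" for x
  proof -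
    have "norm (exp (- (k * of_real x)) * g x) = exp (- Re k * x) * norm (g x)"
      by (simp add: norm_mult)
    also have "\<dots> \<le> exp (- Re k * x) * B" using B by (intro mult_left_mono) auto
    finally show ?thesis by (simp add: mult.commute)
  qed
qed auto



lemma deriv_expk: "((\<lambda>x::real. exp ((k::complex) * of_real x)) has_vector_derivative (k * exp (k * of_real x))) (at x)"
proof -
  have "((\<lambda>z. exp (k * z)) has_field_derivative (exp (k * of_real x) * k)) (at (of_real x))"
    by (auto intro!: derivative_eq_intros)
  from has_vector_derivative_real_field[OF this] show ?thesis by (simp add: mult.commute)
qed

lemma integral_tail_deriv:
  fixes F :: "real \<Rightarrow> complex"
  assumes cont: "continuous_on UNIV F" and int: "\<And>c. F integrable_on {c..}"
  shows "((\<lambda>y. integral {y..} F) has_vector_derivative (- F x)) (at x)"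
proof -
  define c where "c = x - 1"
  have split: "integral {y..} F = integral {c..} F - integral {c..y} F" if "y \<in> {c<..}" for y
  proof -
    have "(F has_integral (integral {c..y} F + integral {y..} F)) ({c..y} \<union> {y..})"
    proof (rule has_integral_Un)
      show "(F has_integral integral {c..y} F) {c..y}"
        by (rule integrable_integral, rule integrable_continuous_real, rule continuous_on_subset[OF cont]) simp
      show "(F has_integral integral {y..} F) {y..}" by (rule integrable_integral, rule int)
      have "{c..y} \<inter> {y..} = {y}" using that by auto
      then show "negligible ({c..y} \<inter> {y..})" by simp
    qed
    moreover have "{c..y} \<union> {y..} = {c..}" using that by auto
    ultimately show ?thesis by (metis add_diff_cancel_left' integral_unique)
  qed
  have d1: "((\<lambda>u. integral {c..u} F) has_vector_derivative F x) (at x within {c..x+1})"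
    by (rule integral_has_vector_derivative[OF continuous_on_subset[OF cont]]) (auto simp: c_def)
  have "at x within {c..x+1} = at x"
    by (rule at_within_interior) (auto simp: c_def)
  with d1 have d2: "((\<lambda>u. integral {c..u} F) has_vector_derivative F x) (at x)" by simp
  have "((\<lambda>y. integral {c..} F - integral {c..y} F) has_vector_derivative (0 - F x)) (at x)"
    by (intro has_vector_derivative_diff has_vector_derivative_const d2)
  then have "((\<lambda>y. integral {c..} F - integral {c..y} F) has_vector_derivative (- F x)) (at x)" by simp
  then show ?thesis
    by (rule has_vector_derivative_transform_within_open[where S="{c<..}"]) (auto simp: c_def split)
qed

lemma ode_fwd:
  fixes g :: "real \<Rightarrow> complex"
  assumes k: "0 < Re k" and g: "continuous_on UNIV g" and B: "\<forall>x. norm (g x) \<le> B"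
  shows "\<exists>w. (\<forall>x. (w has_vector_derivative (k * w x + g x)) (at x)) \<and> (\<forall>x. norm (w x) \<le> B / Re k)"
proof -
  define F where "F = (\<lambda>y. exp (- (k * of_real y)) * g y)"
  have Fint: "\<And>c. F integrable_on {c..}" unfolding F_def by (rule integrable_expg[OF k g B])
  have Fc: "continuous_on UNIV F" unfolding F_def by (auto intro!: continuous_intros g)
  define w where "w = (\<lambda>x. - (exp (k * of_real x) * integral {x..} F))"
  have "(w has_vector_derivative (k * w x + g x)) (at x)" for x
  proof -
    have "(w has_vector_derivative - (exp (k * of_real x) * (- F x) + (k * exp (k * of_real x)) * integral {x..} F)) (at x)"
      unfolding w_def by (intro has_vector_derivative_minus has_vector_derivative_mult deriv_expk integral_tail_deriv[OF Fc Fint])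
    moreover have "- (exp (k * of_real x) * (- F x) + (k * exp (k * of_real x)) * integral {x..} F) = k * w x + g x"
      by (simp add: w_def F_def algebra_simps exp_minus_inverse)
    ultimately show ?thesis by simp
  qed
  moreover have "norm (w x) \<le> B / Re k" for x
  proof -
    have i2: "((\<lambda>y. B * exp (- Re k * y)) has_integral B * (exp (- Re k * x) / Re k)) {x..}"
      using has_integral_mult_right[OF has_integral_exp_minus_to_infinity[OF k, of x], of B] by simp
    have "norm (integral {x..} F) \<le> integral {x..} (\<lambda>y. B * exp (- Re k * y))"
    proof (rule integral_norm_bound_integral[OF Fint])
      show "(\<lambda>y. B * exp (- Re k * y)) integrable_on {x..}" using i2 by blast
      fix y show "norm (F y) \<le> B * exp (- Re k * y)"
        using B[rule_format, of y] by (simp add: F_def norm_mult mult.commute mult_left_mono)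
    qed
    also have "\<dots> = B * (exp (- Re k * x) / Re k)" using i2 by (rule integral_unique)
    finally have nb: "norm (integral {x..} F) \<le> B * (exp (- Re k * x) / Re k)" .
    have "norm (w x) = exp (Re k * x) * norm (integral {x..} F)"
      by (simp add: w_def norm_mult)
    also have "\<dots> \<le> exp (Re k * x) * (B * (exp (- Re k * x) / Re k))"
      by (rule mult_left_mono[OF nb]) simp
    also have "\<dots> = B / Re k" by (simp add: exp_minus[of "Re k * x"] field_simps exp_add[symmetric])
    finally show ?thesis .
  qed
  ultimately show ?thesis by blast
qed



lemma reflect_deriv:
  fixes v :: "real \<Rightarrow> 'a::real_normed_vector"
  assumes "(v has_vector_derivative D) (at (- x))"
  shows "((\<lambda>x. v (- x)) has_vector_derivative - D) (at x)"
proof -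
  have "(uminus has_vector_derivative (-1)) (at x)"
    using has_vector_derivative_minus[OF has_vector_derivative_id[of "at x"]] by (simp add: fun_Compl_def)
  from vector_diff_chain_at[OF this] assms show ?thesis by (simp add: o_def)
qed

lemma ode_bwd:
  fixes g :: "real \<Rightarrow> complex"
  assumes k: "0 < Re k" and g: "continuous_on UNIV g" and B: "\<forall>x. norm (g x) \<le> B"
  shows "\<exists>u. (\<forall>x. (u has_vector_derivative (g x - k * u x)) (at x)) \<and> (\<forall>x. norm (u x) \<le> B / Re k)"
proof -
  have gc: "continuous_on UNIV (\<lambda>y. - g (- y))" by (auto intro!: continuous_intros continuous_on_compose2[OF g])
  obtain v where v: "\<forall>x. (v has_vector_derivative (k * v x + - g (- x))) (at x)" "\<forall>x. norm (v x) \<le> B / Re k"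
    using ode_fwd[OF k gc, of B] B by auto
  show ?thesis
  proof (intro exI[of _ "\<lambda>x. v (- x)"] conjI allI)
    fix x show "((\<lambda>x. v (- x)) has_vector_derivative (g x - k * v (- x))) (at x)"
      using reflect_deriv[OF v(1)[rule_format, of "- x"]] by simp
    show "norm (v (- x)) \<le> B / Re k" using v(2) by blast
  qed
qed

lemma ode_unique0:
  fixes u :: "real \<Rightarrow> complex"
  assumes k: "0 < Re k" and d: "\<forall>x. (u has_vector_derivative (- k * u x)) (at x)"
    and B: "\<forall>x. norm (u x) \<le> B"
  shows "u x = 0"
proof -
  have "((\<lambda>x. exp (k * of_real x) * u x) has_vector_derivative 0) (at x)" for x
  proof -
    have "((\<lambda>x. exp (k * of_real x) * u x) has_vector_derivative
        (exp (k * of_real x) * (- k * u x) + k * exp (k * of_real x) * u x)) (at x)"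
      by (intro has_vector_derivative_mult deriv_expk d[rule_format])
    then show ?thesis by (simp add: algebra_simps)
  qed
  then obtain c where c: "\<And>x. exp (k * of_real x) * u x = c"
    using has_vector_derivative_zero_constant[of UNIV "\<lambda>x. exp (k * of_real x) * u x"] by auto
  have uc: "u x = exp (- (k * of_real x)) * c" for x
    using c[of x] by (metis exp_minus_inverse mult.assoc mult_1 mult.commute)
  have "c = 0"
  proof (rule ccontr)
    assume c0: "c \<noteq> 0"
    define t where "t = (B + 1) / (Re k * norm c)"
    have "0 \<le> B" using B[rule_format, of 0] norm_ge_zero[of "u 0"] by linarith
    then have tpos: "t \<ge> 0" using c0 k by (simp add: t_def)
    have "norm (u (- t)) = exp (Re k * t) * norm c" by (simp add: uc norm_mult)
    also have "\<dots> \<ge> (1 + Re k * t) * norm c" using exp_ge_add_one_self[of "Re k * t"]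
      by (intro mult_right_mono) auto
    finally have "B \<ge> (1 + Re k * t) * norm c" using B by (meson order_trans)
    moreover have "(1 + Re k * t) * norm c = norm c + (B + 1)" using c0 k
      by (simp add: t_def field_simps)
    ultimately show False using norm_ge_zero[of c] by linarith
  qed
  then show ?thesis using uc by simp
qed

lemma ode2_unique:
  fixes u u1 :: "real \<Rightarrow> complex"
  assumes mu: "0 < Re mu"
    and d1: "\<forall>x. (u has_vector_derivative u1 x) (at x)"
    and d2: "\<forall>x. (u1 has_vector_derivative (mu * u x)) (at x)"
    and B: "\<forall>x. norm (u x) \<le> B" and B1: "\<forall>x. norm (u1 x) \<le> B1"
  shows "u x = 0"
proof -
  define k where "k = csqrt mu"
  have kk: "k * k = mu" by (simp add: k_def power2_eq_square[symmetric])
  have kpos: "0 < Re k"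
  proof -
    have "Re k \<ge> 0" unfolding k_def by (rule Re_csqrt)
    moreover have "Re k \<noteq> 0"
    proof
      assume "Re k = 0"
      then have "Re mu = - (Im k * Im k)" using kk[symmetric] by simp
      with mu show False by (smt (verit) zero_le_square)
    qed
    ultimately show ?thesis by simp
  qed
  define w where "w = (\<lambda>x. - (u1 (- x) + k * u (- x)))"
  have "(w has_vector_derivative (- k * w x)) (at x)" for x
  proof -
    have "((\<lambda>x. u1 x + k * u x) has_vector_derivative (mu * u (-x) + k * u1 (-x))) (at (- x))"
      by (intro has_vector_derivative_add has_vector_derivative_mult_right d1[rule_format] d2[rule_format])
    from has_vector_derivative_minus[OF reflect_deriv[OF this]]
    show ?thesis by (simp add: w_def kk[symmetric] algebra_simps)
  qed
  moreover have "norm (w x) \<le> B1 + norm k * B" for x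
    unfolding w_def norm_minus_cancel
    by (rule order_trans[OF norm_triangle_ineq]) (auto simp: norm_mult intro!: add_mono B1[rule_format] mult_left_mono B[rule_format])
  ultimately have w0: "w x = 0" for x using ode_unique0[OF kpos] by blast
  have "(u has_vector_derivative (- k * u x)) (at x)" for x
  proof -
    have "u1 x = - k * u x" using w0[of "- x"] by (simp add: w_def add_eq_0_iff) (metis minus_minus)
    then show ?thesis using d1 by metis
  qed
  then show ?thesis using ode_unique0[OF kpos _ B] by blast
qed



lemma ode2_exist:
  fixes h :: "real \<Rightarrow> complex"
  assumes mu: "0 < Re mu" and h: "continuous_on UNIV h" and B: "\<forall>x. norm (h x) \<le> B"
  shows "\<exists>u u1. (\<forall>x. (u has_vector_derivative u1 x) (at x))
     \<and> (\<forall>x. (u1 has_vector_derivative (mu * u x + h x)) (at x))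
     \<and> (\<forall>x. norm (u x) \<le> B / Re mu) \<and> (\<forall>x. norm (u1 x) \<le> 3 * B / sqrt (Re mu))
     \<and> (\<forall>x. norm (mu * u x + h x) \<le> 3 * B)"
proof -
  define k where "k = csqrt mu"
  have kk: "k * k = mu" by (simp add: k_def power2_eq_square[symmetric])
  define a where "a = Re k"
  have Rmu: "Re mu = a * a - Im k * Im k" using kk[symmetric] by (simp add: a_def)
  have kpos: "0 < a"
  proof -
    have "a \<ge> 0" unfolding a_def k_def by (rule Re_csqrt)
    moreover have "a \<noteq> 0"
    proof
      assume "a = 0"
      with Rmu mu have "0 < - (Im k * Im k)" by simp
      then show False using zero_le_square[of "Im k"] by linarith
    qed
    ultimately show ?thesis by simp
  qed
  have B0: "0 \<le> B" using B[rule_format, of 0] norm_ge_zero[of "h 0"] by linarith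
  have bb: "Im k * Im k \<le> a * a" using Rmu mu by linarith
  have nk2: "norm k * norm k = a * a + Im k * Im k"
    by (simp add: a_def cmod_def power2_eq_square[symmetric])
  have nk: "norm k \<le> 2 * a"
  proof -
    have "(2 * a) * (2 * a) = 4 * (a * a)" by simp
    then have "norm k * norm k \<le> (2 * a) * (2 * a)" using nk2 bb zero_le_square[of a] by linarith
    from this[folded power2_eq_square] show ?thesis by (rule power2_le_imp_le) (use kpos in simp)
  qed
  have "norm mu = norm k * norm k" using kk norm_mult by metis
  then have nmu: "norm mu \<le> 2 * (a * a)" using nk2 bb by linarith
  have aRe2: "Re mu \<le> a * a" using Rmu zero_le_square[of "Im k"] by linarith
  have "sqrt (Re mu) \<le> sqrt (a * a)" using aRe2 by (rule real_sqrt_le_mono)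
  then have aRe: "sqrt (Re mu) \<le> a" using kpos by simp
  have ka: "0 < Re k" using kpos by (simp add: a_def)
  obtain w where w: "\<forall>x. (w has_vector_derivative (k * w x + h x)) (at x)" "\<forall>x. norm (w x) \<le> B / a"
    using ode_fwd[OF ka h B] by (auto simp: a_def)
  have wc: "continuous_on UNIV w"
    by (rule continuous_on_vector_derivative[of UNIV w "\<lambda>x. k * w x + h x"]) (use w(1) in simp)
  obtain u where u: "\<forall>x. (u has_vector_derivative (w x - k * u x)) (at x)" "\<forall>x. norm (u x) \<le> (B / a) / a"
    using ode_bwd[OF ka wc w(2)] by (auto simp: a_def)
  define u1 where "u1 = (\<lambda>x. w x - k * u x)"
  have d2: "(u1 has_vector_derivative (mu * u x + h x)) (at x)" for x
  proof -
    have "(u1 has_vector_derivative ((k * w x + h x) - k * (w x - k * u x))) (at x)"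
      unfolding u1_def by (rule has_vector_derivative_diff[OF w(1)[rule_format] has_vector_derivative_mult_right[OF u(1)[rule_format]]])
    then show ?thesis by (simp add: kk[symmetric] algebra_simps)
  qed
  have bu: "norm (u x) \<le> B / Re mu" for x
  proof -
    have "(B / a) / a = B / (a * a)" by simp
    also have "\<dots> \<le> B / Re mu" using B0 mu aRe2 by (intro divide_left_mono) auto
    finally show ?thesis using u(2) by (meson order_trans)
  qed
  have bu1: "norm (u1 x) \<le> 3 * B / sqrt (Re mu)" for x
  proof -
    have "norm (u1 x) \<le> norm (w x) + norm k * norm (u x)"
      unfolding u1_def by (metis norm_triangle_ineq4 norm_mult)
    also have "\<dots> \<le> B / a + (2 * a) * ((B / a) / a)"
      using w(2) u(2) nk kpos by (intro add_mono mult_mono) auto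
    also have "\<dots> = 3 * B / a" using kpos by (simp add: field_simps)
    also have "\<dots> \<le> 3 * B / sqrt (Re mu)" using B0 mu aRe kpos by (intro divide_left_mono) auto
    finally show ?thesis .
  qed
  have bu2: "norm (mu * u x + h x) \<le> 3 * B" for x
  proof -
    have "norm (mu * u x + h x) \<le> norm mu * norm (u x) + norm (h x)"
      by (metis norm_triangle_ineq norm_mult)
    also have "\<dots> \<le> (2 * (a * a)) * ((B / a) / a) + B"
      using nmu u(2) B by (intro add_mono mult_mono) auto
    also have "\<dots> = 3 * B" using kpos by (simp add: field_simps)
    finally show ?thesis .
  qed
  show ?thesis
    by (rule exI[of _ u], rule exI[of _ u1]) (use u(1) d2 bu bu1 bu2 in \<open>auto simp: u1_def\<close>)
qed



lemma lipschitz_bound: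
  fixes f :: "real \<Rightarrow> 'a::real_normed_vector"
  assumes d: "\<forall>x. (f has_vector_derivative f' x) (at x)" and B: "\<forall>x. norm (f' x) \<le> B"
  shows "norm (f x - f y) \<le> B * norm (x - y)"
proof (rule differentiable_bound[of UNIV f "\<lambda>x h. h *\<^sub>R f' x"])
  fix z :: real
  show "(f has_derivative (\<lambda>h. h *\<^sub>R f' z)) (at z within UNIV)"
    using d by (simp add: has_vector_derivative_def)
  show "onorm (\<lambda>h. h *\<^sub>R f' z) \<le> B"
  proof (rule onorm_le)
    fix h :: real show "norm (h *\<^sub>R f' z) \<le> B * norm h"
      using B[rule_format, of z] by (simp add: mult.commute[of B] mult_left_mono)
  qed
qed auto

lemma lipschitz_uc:
  fixes f :: "real \<Rightarrow> 'a::real_normed_vector"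
  assumes d: "\<forall>x. (f has_vector_derivative f' x) (at x)" and B: "\<forall>x. norm (f' x) \<le> B"
  shows "uniformly_continuous_on UNIV f"
  unfolding uniformly_continuous_on_def
proof (intro allI impI)
  fix e :: real assume e: "0 < e"
  have B0: "0 \<le> B" using B[rule_format, of 0] norm_ge_zero[of "f' 0"] by linarith
  show "\<exists>d>0. \<forall>x\<in>UNIV. \<forall>x'\<in>UNIV. dist x' x < d \<longrightarrow> dist (f x') (f x) < e"
  proof (intro exI[of _ "e / (B + 1)"] conjI ballI impI)
    show "0 < e / (B + 1)" using e B0 by simp
    fix x x' :: real assume "dist x' x < e / (B + 1)"
    then have xx: "norm (x' - x) * (B + 1) < e" using B0 by (simp add: dist_norm field_simps)
    have "dist (f x') (f x) \<le> B * norm (x' - x)"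
      unfolding dist_norm by (rule lipschitz_bound[OF d B])
    also have "\<dots> \<le> norm (x' - x) * (B + 1)" by (simp add: algebra_simps)
    finally show "dist (f x') (f x) < e" using xx by linarith
  qed
qed

lemma uc_mult:
  fixes f g :: "real \<Rightarrow> 'a::real_normed_algebra"
  assumes uf: "uniformly_continuous_on UNIV f" and ug: "uniformly_continuous_on UNIV g"
    and bf: "\<forall>x. norm (f x) \<le> Bf" and bg: "\<forall>x. norm (g x) \<le> Bg"
  shows "uniformly_continuous_on UNIV (\<lambda>x. f x * g x)"
  unfolding uniformly_continuous_on_def
proof (intro allI impI)
  fix e :: real assume e: "0 < e"
  have Bf0: "0 \<le> Bf" using bf[rule_format, of 0] norm_ge_zero[of "f 0"] by linarith
  have Bg0: "0 \<le> Bg" using bg[rule_format, of 0] norm_ge_zero[of "g 0"] by linarith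
  obtain d1 where d1: "d1 > 0" "\<forall>x x'. dist x' x < d1 \<longrightarrow> dist (g x') (g x) < e / (2 * (Bf + 1))"
    using uf ug e Bf0 unfolding uniformly_continuous_on_def
    by (metis UNIV_I divide_pos_pos mult_pos_pos zero_less_numeral add_nonneg_pos zero_less_one)
  obtain d2 where d2: "d2 > 0" "\<forall>x x'. dist x' x < d2 \<longrightarrow> dist (f x') (f x) < e / (2 * (Bg + 1))"
    using uf ug e Bg0 unfolding uniformly_continuous_on_def
    by (metis UNIV_I divide_pos_pos mult_pos_pos zero_less_numeral add_nonneg_pos zero_less_one)
  show "\<exists>d>0. \<forall>x\<in>UNIV. \<forall>x'\<in>UNIV. dist x' x < d \<longrightarrow> dist (f x' * g x') (f x * g x) < e"
  proof (intro exI[of _ "min d1 d2"] conjI ballI impI)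
    show "0 < min d1 d2" using d1 d2 by simp
    fix x x' :: real assume xx: "dist x' x < min d1 d2"
    have g1: "norm (g x' - g x) \<le> e / (2 * (Bf + 1))"
      using d1(2) xx by (simp add: dist_norm less_imp_le)
    have f1: "norm (f x' - f x) \<le> e / (2 * (Bg + 1))"
      using d2(2) xx by (simp add: dist_norm less_imp_le)
    have g1': "norm (g x' - g x) < e / (2 * (Bf + 1))"
      using d1(2) xx by (simp add: dist_norm)
    have "f x' * g x' - f x * g x = f x' * (g x' - g x) + (f x' - f x) * g x"
      by (simp add: algebra_simps)
    then have "norm (f x' * g x' - f x * g x) \<le> norm (f x') * norm (g x' - g x) + norm (f x' - f x) * norm (g x)"
      by (metis norm_triangle_le norm_mult_ineq add_mono)
    also have "\<dots> \<le> (Bf + 1) * norm (g x' - g x) + norm (f x' - f x) * (Bg + 1)"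
      using bf bg by (intro add_mono mult_right_mono mult_left_mono) (auto intro: order_trans)
    also have "\<dots> < (Bf + 1) * (e / (2 * (Bf + 1))) + (e / (2 * (Bg + 1))) * (Bg + 1)"
      using Bf0 Bg0 g1' f1 by (intro add_less_le_mono mult_strict_left_mono mult_right_mono) auto
    also have "\<dots> = e"
    proof -
      have "(Bf + 1) * (e / (2 * (Bf + 1))) = e / 2" using Bf0 by (simp add: field_simps)
      moreover have "(e / (2 * (Bg + 1))) * (Bg + 1) = e / 2" using Bg0 by (simp add: field_simps)
      ultimately show ?thesis by (metis field_sum_of_halves)
    qed
    finally show "dist (f x' * g x') (f x * g x) < e" by (simp add: dist_norm)
  qed
qed



lemma hvd_fst: "(u has_vector_derivative D) (at x) \<Longrightarrow> ((\<lambda>x. fst (u x)) has_vector_derivative fst D) (at x)"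
  by (rule bounded_linear.has_vector_derivative[OF bounded_linear_fst])

lemma hvd_snd: "(u has_vector_derivative D) (at x) \<Longrightarrow> ((\<lambda>x. snd (u x)) has_vector_derivative snd D) (at x)"
  by (rule bounded_linear.has_vector_derivative[OF bounded_linear_snd])

lemma uc_pair:
  fixes f :: "real \<Rightarrow> 'a::real_normed_vector" and g :: "real \<Rightarrow> 'b::real_normed_vector"
  assumes "uniformly_continuous_on UNIV f" "uniformly_continuous_on UNIV g"
  shows "uniformly_continuous_on UNIV (\<lambda>x. (f x, g x))"
proof -
  have a: "uniformly_continuous_on UNIV (\<lambda>x. (f x, 0::'b))"
    using bounded_linear.uniformly_continuous_on[OF bounded_linear_Pair[OF bounded_linear_ident bounded_linear_zero] assms(1)] .
  have b: "uniformly_continuous_on UNIV (\<lambda>x. (0::'a, g x))"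
    using bounded_linear.uniformly_continuous_on[OF bounded_linear_Pair[OF bounded_linear_zero bounded_linear_ident] assms(2)] .
  have "uniformly_continuous_on UNIV (\<lambda>x. (f x, 0::'b) + (0::'a, g x))"
    by (rule uniformly_continuous_on_add[OF a b])
  then show ?thesis by simp
qed

lemma uc_fst: fixes f :: "real \<Rightarrow> 'a::real_normed_vector \<times> 'b::real_normed_vector" shows "uniformly_continuous_on UNIV f \<Longrightarrow> uniformly_continuous_on UNIV (\<lambda>x. fst (f x))"
  by (rule bounded_linear.uniformly_continuous_on[OF bounded_linear_fst])
lemma uc_snd: fixes f :: "real \<Rightarrow> 'a::real_normed_vector \<times> 'b::real_normed_vector" shows "uniformly_continuous_on UNIV f \<Longrightarrow> uniformly_continuous_on UNIV (\<lambda>x. snd (f x))"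
  by (rule bounded_linear.uniformly_continuous_on[OF bounded_linear_snd])

lemma bounded_range_iff: "bounded (range f) \<longleftrightarrow> (\<exists>B. \<forall>x. norm (f x) \<le> B)"
  by (auto simp: bounded_iff)

lemma supn_ge: assumes "bounded (range f)" shows "norm (f x) \<le> supn f"
proof -
  obtain B where "\<forall>x. norm (f x) \<le> B" using assms by (auto simp: bounded_iff)
  then have "bdd_above (range (\<lambda>x. norm (f x)))" by (auto intro: bdd_aboveI)
  then show ?thesis unfolding supn_def by (rule cSUP_upper[OF UNIV_I])
qed

lemma supn_le: assumes "\<forall>x. norm (f x) \<le> c" shows "supn f \<le> c"
  unfolding supn_def using assms by (intro cSUP_least) auto

definition L0a :: "real \<Rightarrow> (real \<Rightarrow> real) \<Rightarrow> (real \<Rightarrow> complex \<times> complex) \<Rightarrow> real \<Rightarrow> complex \<times> complex" where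
  "L0a eps Dd u x = mat_app eps (Dd x) 0 (1 / eps) (vector_derivative (\<lambda>y. vector_derivative u (at y)) (at x))"

definition L1a :: "real \<Rightarrow> real \<Rightarrow> (real \<Rightarrow> real) \<Rightarrow> (real \<Rightarrow> real) \<Rightarrow> (real \<Rightarrow> real) \<Rightarrow> (real \<Rightarrow> real)
   \<Rightarrow> (real \<Rightarrow> complex \<times> complex) \<Rightarrow> real \<Rightarrow> complex \<times> complex" where
  "L1a eps s a b c d u x = mat_app (a x) (b x) 0 s (vector_derivative u (at x)) + mat_app (c x) 0 (1 / eps) (d x) (u x)"

lemma L0a_eq:
  assumes "\<forall>y. (u has_vector_derivative u1 y) (at y)" "\<forall>y. (u1 has_vector_derivative u2 y) (at y)"
  shows "L0a eps Dd u x = (of_real eps * fst (u2 x) + of_real (Dd x) * snd (u2 x), of_real (1 / eps) * snd (u2 x))"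
proof -
  have "(\<lambda>y. vector_derivative u (at y)) = u1" using assms(1) by (auto intro: vector_derivative_at)
  then have "vector_derivative (\<lambda>y. vector_derivative u (at y)) (at x) = u2 x"
    using assms(2) by (auto intro: vector_derivative_at)
  then show ?thesis by (simp add: L0a_def mat_app_def)
qed

lemma L1a_eq:
  assumes "\<forall>y. (u has_vector_derivative u1 y) (at y)"
  shows "L1a eps s a b c d u x = (of_real (a x) * fst (u1 x) + of_real (b x) * snd (u1 x) + of_real (c x) * fst (u x),
       of_real s * snd (u1 x) + of_real (1 / eps) * fst (u x) + of_real (d x) * snd (u x))"
proof -
  have "vector_derivative u (at x) = u1 x" using assms by (auto intro: vector_derivative_at)
  then show ?thesis by (simp add: L1a_def mat_app_def)
qed



lemma norm_fst_le': "norm (fst p) \<le> norm p" by (metis prod.collapse norm_fst_le)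
lemma norm_snd_le': "norm (snd p) \<le> norm p" by (metis prod.collapse norm_snd_le)

lemma buc_bound: "buc f \<Longrightarrow> \<exists>B. \<forall>x. norm (f x) \<le> B"
  by (auto simp: buc_def bounded_iff)

lemma eq_split:
  assumes "\<forall>y. (u has_vector_derivative u1 y) (at y)" "\<forall>y. (u1 has_vector_derivative u2 y) (at y)"
    and "L0a eps Dd u x - cscale lam (u x) = f x" and eps: "0 < eps"
  shows "fst (u2 x) = (fst (f x) + lam * fst (u x) - of_real (Dd x) * snd (u2 x)) / of_real eps"
    and "snd (u2 x) = of_real eps * (snd (f x) + lam * snd (u x))"
proof -
  have e: "(of_real eps * fst (u2 x) + of_real (Dd x) * snd (u2 x), of_real (1 / eps) * snd (u2 x)) - cscale lam (u x) = f x"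
    using assms(3) unfolding L0a_eq[OF assms(1,2)] .
  have e1: "of_real eps * fst (u2 x) + of_real (Dd x) * snd (u2 x) - lam * fst (u x) = fst (f x)"
    using arg_cong[OF e, of fst] by (simp add: cscale_def)
  have e2: "of_real (1 / eps) * snd (u2 x) - lam * snd (u x) = snd (f x)"
    using arg_cong[OF e, of snd] by (simp add: cscale_def)
  have ne: "(of_real eps :: complex) \<noteq> 0" using eps by simp
  from e1 have "of_real eps * fst (u2 x) = fst (f x) + lam * fst (u x) - of_real (Dd x) * snd (u2 x)"
    by (simp add: algebra_simps)
  then show "fst (u2 x) = (fst (f x) + lam * fst (u x) - of_real (Dd x) * snd (u2 x)) / of_real eps"
    using ne by (simp add: field_simps)
  from e2 have "of_real (1 / eps) * snd (u2 x) = snd (f x) + lam * snd (u x)"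
    by (simp add: algebra_simps)
  then have "of_real eps * (of_real (1 / eps) * snd (u2 x)) = of_real eps * (snd (f x) + lam * snd (u x))"
    by simp
  moreover have "of_real eps * (of_real (1 / eps) * snd (u2 x)) = snd (u2 x)"
    using ne by (simp add: of_real_divide)
  ultimately show "snd (u2 x) = of_real eps * (snd (f x) + lam * snd (u x))" by simp
qed

lemma core_unique:
  assumes eps: "0 < eps" and lam: "0 < Re lam"
    and u: "buc2 u" "\<forall>x. L0a eps Dd u x - cscale lam (u x) = f x"
    and v: "buc2 v" "\<forall>x. L0a eps Dd v x - cscale lam (v x) = f x"
  shows "u = v"
proof -
  obtain u1 u2 where hu: "\<forall>x. (u has_vector_derivative u1 x) (at x)" "\<forall>x. (u1 has_vector_derivative u2 x) (at x)"
    "buc u" "buc u1" using u(1) unfolding buc2_def by blast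
  obtain v1 v2 where hv: "\<forall>x. (v has_vector_derivative v1 x) (at x)" "\<forall>x. (v1 has_vector_derivative v2 x) (at x)"
    "buc v" "buc v1" using v(1) unfolding buc2_def by blast
  obtain Bu where Bu: "\<forall>x. norm (u x) \<le> Bu" using buc_bound[OF hu(3)] by blast
  obtain Bu1 where Bu1: "\<forall>x. norm (u1 x) \<le> Bu1" using buc_bound[OF hu(4)] by blast
  obtain Bv where Bv: "\<forall>x. norm (v x) \<le> Bv" using buc_bound[OF hv(3)] by blast
  obtain Bv1 where Bv1: "\<forall>x. norm (v1 x) \<le> Bv1" using buc_bound[OF hv(4)] by blast
  note eu = eq_split[OF hu(1,2) u(2)[rule_format] eps]
  note ev = eq_split[OF hv(1,2) v(2)[rule_format] eps]
  have ne: "(of_real eps :: complex) \<noteq> 0" using eps by simp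
  have s0: "snd (u x) - snd (v x) = 0" for x
  proof (rule ode2_unique[of "of_real eps * lam"])
    show "0 < Re (of_real eps * lam)" using eps lam by simp
    show "\<forall>x. ((\<lambda>x. snd (u x) - snd (v x)) has_vector_derivative (snd (u1 x) - snd (v1 x))) (at x)"
      using hu(1) hv(1) by (auto intro!: has_vector_derivative_diff hvd_snd)
    show "\<forall>x. ((\<lambda>x. snd (u1 x) - snd (v1 x)) has_vector_derivative (of_real eps * lam * (snd (u x) - snd (v x)))) (at x)"
    proof
      fix x
      have "((\<lambda>x. snd (u1 x) - snd (v1 x)) has_vector_derivative (snd (u2 x) - snd (v2 x))) (at x)"
        using hu(2) hv(2) by (auto intro!: has_vector_derivative_diff hvd_snd)
      moreover have "snd (u2 x) - snd (v2 x) = of_real eps * lam * (snd (u x) - snd (v x))"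
        using eu(2)[where x=x] ev(2)[where x=x] by (simp add: algebra_simps)
      ultimately show "((\<lambda>x. snd (u1 x) - snd (v1 x)) has_vector_derivative (of_real eps * lam * (snd (u x) - snd (v x)))) (at x)"
        by simp
    qed
    show "\<forall>x. norm (snd (u x) - snd (v x)) \<le> Bu + Bv"
      using Bu Bv norm_snd_le' by (meson add_mono norm_triangle_ineq4 order_trans)
    show "\<forall>x. norm (snd (u1 x) - snd (v1 x)) \<le> Bu1 + Bv1"
      using Bu1 Bv1 norm_snd_le' by (meson add_mono norm_triangle_ineq4 order_trans)
  qed
  then have s: "snd (u x) = snd (v x)" for x by simp
  have s2: "snd (u2 x) = snd (v2 x)" for x using eu(2)[where x=x] ev(2)[where x=x] s[of x] by simp
  have f0: "fst (u x) - fst (v x) = 0" for x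
  proof (rule ode2_unique[of "lam / of_real eps"])
    show "0 < Re (lam / of_real eps)" using eps lam by simp
    show "\<forall>x. ((\<lambda>x. fst (u x) - fst (v x)) has_vector_derivative (fst (u1 x) - fst (v1 x))) (at x)"
      using hu(1) hv(1) by (auto intro!: has_vector_derivative_diff hvd_fst)
    show "\<forall>x. ((\<lambda>x. fst (u1 x) - fst (v1 x)) has_vector_derivative (lam / of_real eps * (fst (u x) - fst (v x)))) (at x)"
    proof
      fix x
      have "((\<lambda>x. fst (u1 x) - fst (v1 x)) has_vector_derivative (fst (u2 x) - fst (v2 x))) (at x)"
        using hu(2) hv(2) by (auto intro!: has_vector_derivative_diff hvd_fst)
      moreover have "fst (u2 x) - fst (v2 x) = lam / of_real eps * (fst (u x) - fst (v x))"
      proof -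
        have a: "of_real eps * fst (u2 x) = fst (f x) + lam * fst (u x) - of_real (Dd x) * snd (u2 x)"
          using eu(1)[where x=x] ne by simp
        have b: "of_real eps * fst (v2 x) = fst (f x) + lam * fst (v x) - of_real (Dd x) * snd (u2 x)"
          using ev(1)[where x=x] ne s2[of x] by simp
        have "of_real eps * (fst (u2 x) - fst (v2 x)) = of_real eps * fst (u2 x) - of_real eps * fst (v2 x)"
          by (simp add: right_diff_distrib)
        also have "\<dots> = lam * (fst (u x) - fst (v x))" unfolding a b by (simp add: algebra_simps)
        finally show ?thesis using ne by (simp add: field_simps)
      qed
      ultimately show "((\<lambda>x. fst (u1 x) - fst (v1 x)) has_vector_derivative (lam / of_real eps * (fst (u x) - fst (v x)))) (at x)"
        by simp
    qed
    show "\<forall>x. norm (fst (u x) - fst (v x)) \<le> Bu + Bv"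
      using Bu Bv norm_fst_le' by (meson add_mono norm_triangle_ineq4 order_trans)
    show "\<forall>x. norm (fst (u1 x) - fst (v1 x)) \<le> Bu1 + Bv1"
      using Bu1 Bv1 norm_fst_le' by (meson add_mono norm_triangle_ineq4 order_trans)
  qed
  show "u = v"
  proof
    fix x show "u x = v x" using f0[of x] s[of x] by (simp add: prod_eq_iff)
  qed
qed



definition CC :: "real \<Rightarrow> real \<Rightarrow> real \<Rightarrow> real" where
  "CC eps K KD = K * (3 * (1 + 3 * KD * eps) / sqrt eps) + K * (3 * sqrt eps) + K * (1 + 3 * KD * eps)
     + K * (3 * sqrt eps) + (1 + 3 * KD * eps) / eps + K"

lemma div_r_sqrt: assumes "0 \<le> P" "1 \<le> r" shows "P / r \<le> P / sqrt r"
proof -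
  have s1: "1 \<le> sqrt r" using assms(2) by simp
  have "sqrt r * 1 \<le> sqrt r * sqrt r" by (rule mult_left_mono[OF s1]) (use assms(2) in simp)
  then have "sqrt r \<le> r" using assms(2) by simp
  moreover have "0 < sqrt r" using assms(2) by simp
  ultimately show ?thesis using assms(1) by (intro divide_left_mono) auto
qed

lemma arith_CC:
  fixes K c1 c2 A1 B q e :: real
  assumes "q \<noteq> 0" "e \<noteq> 0"
  shows "(K * (c1 * B / q) + K * (c2 * B / q) + K * (A1 * B / q))
      + (K * (c2 * B / q) + (1 / e) * (A1 * B / q) + K * (B / q))
    = (K * c1 + K * c2 + K * A1 + K * c2 + A1 / e + K) * B / q"
  using assms by (simp add: field_simps)

lemma core_exist:
  fixes Dd a b c d :: "real \<Rightarrow> real"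
  assumes eps: "0 < eps" and lam: "1 \<le> Re lam"
    and Duc: "uniformly_continuous_on UNIV Dd" and KD: "\<forall>x. \<bar>Dd x\<bar> \<le> KD"
    and Ka: "\<forall>x. \<bar>a x\<bar> \<le> K" and Kb: "\<forall>x. \<bar>b x\<bar> \<le> K" and Kc: "\<forall>x. \<bar>c x\<bar> \<le> K"
    and Kd: "\<forall>x. \<bar>d x\<bar> \<le> K" and Ks: "\<bar>s\<bar> \<le> K"
    and f: "buc f"
  shows "\<exists>u. buc2 u \<and> (\<forall>x. L0a eps Dd u x - cscale lam (u x) = f x) \<and>
        (\<forall>x. norm (L1a eps s a b c d u x) \<le> CC eps K KD * supn f / sqrt (Re lam))"
proof -
  define B where "B = supn f"
  have fb: "bounded (range f)" and fuc: "uniformly_continuous_on UNIV f" using f by (auto simp: buc_def)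
  have Bf: "norm (f x) \<le> B" for x unfolding B_def by (rule supn_ge[OF fb])
  have B0: "0 \<le> B" using Bf[of 0] norm_ge_zero[of "f 0"] by linarith
  have KD0: "0 \<le> KD" using KD[rule_format, of 0] by linarith
  have K0: "0 \<le> K" using Ks by linarith
  define f1 where "f1 = (\<lambda>x. fst (f x))"
  define f2 where "f2 = (\<lambda>x. snd (f x))"
  have f1uc: "uniformly_continuous_on UNIV f1" unfolding f1_def by (rule uc_fst[OF fuc])
  have f2uc: "uniformly_continuous_on UNIV f2" unfolding f2_def by (rule uc_snd[OF fuc])
  have f1b: "norm (f1 x) \<le> B" for x unfolding f1_def using norm_fst_le'[of "f x"] Bf[of x] by linarith
  have f2b: "norm (f2 x) \<le> B" for x unfolding f2_def using norm_snd_le'[of "f x"] Bf[of x] by linarith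
  define r where "r = Re lam"
  have r1: "1 \<le> r" using lam by (simp add: r_def)
  have rpos: "0 < r" using r1 by simp
  have se: "sqrt eps * sqrt eps = eps" using eps by simp
  have sepos: "0 < sqrt eps" using eps by simp
  have srpos: "0 < sqrt r" using rpos by simp
  define mu2 where "mu2 = of_real eps * lam"
  define h2 where "h2 = (\<lambda>x. of_real eps * f2 x)"
  have Remu2: "Re mu2 = eps * r" by (simp add: mu2_def r_def)
  have h2uc: "uniformly_continuous_on UNIV h2" unfolding h2_def by (rule uniformly_continuous_on_cmul_left[OF f2uc])
  have h2b: "\<forall>x. norm (h2 x) \<le> eps * B" using f2b eps by (simp add: h2_def norm_mult mult_left_mono)
  have mu2pos: "0 < Re mu2" using Remu2 eps rpos by simp
  obtain v2 v2d where v2d: "\<forall>x. (v2 has_vector_derivative v2d x) (at x)"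
     and v2dd: "\<forall>x. (v2d has_vector_derivative (mu2 * v2 x + h2 x)) (at x)"
     and v2b: "\<forall>x. norm (v2 x) \<le> eps * B / Re mu2" and v2db: "\<forall>x. norm (v2d x) \<le> 3 * (eps * B) / sqrt (Re mu2)"
     and v2ddb: "\<forall>x. norm (mu2 * v2 x + h2 x) \<le> 3 * (eps * B)"
    using ode2_exist[OF mu2pos uniformly_continuous_imp_continuous[OF h2uc] h2b] by blast
  define w2 where "w2 = (\<lambda>x. mu2 * v2 x + h2 x)"
  have v2uc: "uniformly_continuous_on UNIV v2" by (rule lipschitz_uc[OF v2d v2db])
  have v2duc: "uniformly_continuous_on UNIV v2d" by (rule lipschitz_uc[OF v2dd v2ddb])
  have w2uc: "uniformly_continuous_on UNIV w2" unfolding w2_def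
    by (intro uniformly_continuous_on_add uniformly_continuous_on_cmul_left v2uc h2uc)
  define A1 where "A1 = 1 + 3 * KD * eps"
  have "0 \<le> 3 * KD * eps" using KD0 eps by simp
  then have A1pos: "0 < A1" by (simp add: A1_def)
  define h1 where "h1 = (\<lambda>x. (f1 x - of_real (Dd x) * w2 x) * inverse (of_real eps))"
  have Dcuc: "uniformly_continuous_on UNIV (\<lambda>x. (of_real (Dd x) :: complex))"
    by (rule bounded_linear.uniformly_continuous_on[OF bounded_linear_of_real Duc])
  have h1uc: "uniformly_continuous_on UNIV h1" unfolding h1_def
  proof (intro uniformly_continuous_on_cmul_right uniformly_continuous_on_diff f1uc)
    show "uniformly_continuous_on UNIV (\<lambda>x. complex_of_real (Dd x) * w2 x)"
      by (rule uc_mult[OF Dcuc w2uc, of KD "3 * (eps * B)"]) (use KD v2ddb in \<open>auto simp: w2_def\<close>)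
  qed
  have h1b: "\<forall>x. norm (h1 x) \<le> A1 * B / eps"
  proof
    fix x
    have "norm (f1 x - of_real (Dd x) * w2 x) \<le> norm (f1 x) + \<bar>Dd x\<bar> * norm (w2 x)"
      by (metis norm_triangle_ineq4 norm_mult norm_of_real)
    also have "\<dots> \<le> B + KD * (3 * (eps * B))"
      using f1b[of x] KD v2ddb KD0 by (intro add_mono mult_mono) (auto simp: w2_def)
    also have "\<dots> = A1 * B" by (simp add: A1_def algebra_simps)
    finally have "norm (f1 x - of_real (Dd x) * w2 x) \<le> A1 * B" .
    moreover have "norm (h1 x) = norm (f1 x - of_real (Dd x) * w2 x) / eps"
      using eps by (simp add: h1_def norm_mult norm_inverse divide_inverse)
    ultimately show "norm (h1 x) \<le> A1 * B / eps"
      using eps by (simp add: divide_right_mono)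
  qed
  define mu1 where "mu1 = lam / of_real eps"
  have Remu1: "Re mu1 = r / eps" by (simp add: mu1_def r_def)
  have mu1pos: "0 < Re mu1" using Remu1 eps rpos by simp
  obtain v1 v1d where v1d: "\<forall>x. (v1 has_vector_derivative v1d x) (at x)"
     and v1dd: "\<forall>x. (v1d has_vector_derivative (mu1 * v1 x + h1 x)) (at x)"
     and v1b: "\<forall>x. norm (v1 x) \<le> A1 * B / eps / Re mu1" and v1db: "\<forall>x. norm (v1d x) \<le> 3 * (A1 * B / eps) / sqrt (Re mu1)"
     and v1ddb: "\<forall>x. norm (mu1 * v1 x + h1 x) \<le> 3 * (A1 * B / eps)"
    using ode2_exist[OF mu1pos uniformly_continuous_imp_continuous[OF h1uc] h1b] by blast
  define w1 where "w1 = (\<lambda>x. mu1 * v1 x + h1 x)"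
  have v1uc: "uniformly_continuous_on UNIV v1" by (rule lipschitz_uc[OF v1d v1db])
  have v1duc: "uniformly_continuous_on UNIV v1d" by (rule lipschitz_uc[OF v1dd v1ddb])
  have w1uc: "uniformly_continuous_on UNIV w1" unfolding w1_def
    by (intro uniformly_continuous_on_add uniformly_continuous_on_cmul_left v1uc h1uc)
  define u where "u = (\<lambda>x. (v1 x, v2 x))"
  define u1 where "u1 = (\<lambda>x. (v1d x, v2d x))"
  define u2 where "u2 = (\<lambda>x. (w1 x, w2 x))"
  have du: "\<forall>x. (u has_vector_derivative u1 x) (at x)"
    unfolding u_def u1_def using v1d v2d by (auto intro: has_vector_derivative_Pair)
  have du1: "\<forall>x. (u1 has_vector_derivative u2 x) (at x)"
    unfolding u1_def u2_def w1_def w2_def using v1dd v2dd by (auto intro: has_vector_derivative_Pair)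
  have bpair: "bounded (range (\<lambda>x. (p x, q x)))" if "\<forall>x. norm (p x) \<le> P" "\<forall>x. norm (q x) \<le> Q"
    for p q :: "real \<Rightarrow> complex" and P Q
    unfolding bounded_range_iff
    by (rule exI[of _ "P + Q"]) (metis add_mono norm_Pair_le order_trans that)
  have "buc2 u" unfolding buc2_def
  proof (intro exI conjI)
    show "\<forall>x. (u has_vector_derivative u1 x) (at x)" by (rule du)
    show "\<forall>x. (u1 has_vector_derivative u2 x) (at x)" by (rule du1)
    show "buc u" unfolding buc_def u_def using v1b v2b
      by (auto intro!: uc_pair v1uc v2uc bpair)
    show "buc u1" unfolding buc_def u1_def using v1db v2db
      by (auto intro!: uc_pair v1duc v2duc bpair)
    have "bounded (range (\<lambda>x. (w1 x, w2 x)))"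
      by (rule bpair[of w1 "3 * (A1 * B / eps)" w2 "3 * (eps * B)"]) (use v1ddb v2ddb in \<open>simp_all add: w1_def w2_def\<close>)
    then show "buc u2" unfolding buc_def u2_def
      by (auto intro!: uc_pair w1uc w2uc)
  qed
  moreover have "L0a eps Dd u x - cscale lam (u x) = f x" for x
  proof -
    have ne: "(of_real eps :: complex) \<noteq> 0" using eps by simp
    have e1: "of_real eps * w1 x + of_real (Dd x) * w2 x - lam * v1 x = f1 x"
      using ne by (simp add: w1_def h1_def mu1_def field_simps)
    have e2: "of_real (1 / eps) * w2 x - lam * v2 x = f2 x"
      using ne by (simp add: w2_def h2_def mu2_def field_simps)
    show ?thesis unfolding L0a_eq[OF du du1]
      using e1 e2 by (simp add: u_def u2_def cscale_def f1_def f2_def prod_eq_iff)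
  qed
  moreover have "norm (L1a eps s a b c d u x) \<le> CC eps K KD * B / sqrt r" for x
  proof -
    have nv2: "norm (v2 x) \<le> B / sqrt r"
    proof -
      have "norm (v2 x) \<le> B / r" using v2b eps by (simp add: Remu2)
      also have "\<dots> \<le> B / sqrt r" by (rule div_r_sqrt[OF B0 r1])
      finally show ?thesis .
    qed
    have nv2d: "norm (v2d x) \<le> 3 * sqrt eps * B / sqrt r"
    proof -
      have "3 * (eps * B) / sqrt (Re mu2) = 3 * sqrt eps * B / sqrt r"
        unfolding Remu2 real_sqrt_mult using sepos srpos se by (simp add: field_simps)
      then show ?thesis using v2db by simp
    qed
    have nv1: "norm (v1 x) \<le> A1 * B / sqrt r"
    proof -
      have "A1 * B / eps / Re mu1 = A1 * B / r" unfolding Remu1 using eps by (simp add: field_simps)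
      also have "\<dots> \<le> A1 * B / sqrt r" by (rule div_r_sqrt[OF _ r1]) (use A1pos B0 in simp)
      finally show ?thesis using v1b by (meson order_trans)
    qed
    have nv1d: "norm (v1d x) \<le> 3 * A1 / sqrt eps * B / sqrt r"
    proof -
      have "3 * (A1 * B / eps) / sqrt (Re mu1) = 3 * A1 / sqrt eps * B / sqrt r"
        unfolding Remu1 real_sqrt_divide using sepos srpos se by (simp add: field_simps)
      then show ?thesis using v1db by simp
    qed
    have L: "L1a eps s a b c d u x = (of_real (a x) * v1d x + of_real (b x) * v2d x + of_real (c x) * v1 x,
       of_real s * v2d x + of_real (1 / eps) * v1 x + of_real (d x) * v2 x)"
      unfolding L1a_eq[OF du] by (simp add: u_def u1_def)
    have n1: "norm (of_real (a x) * v1d x + of_real (b x) * v2d x + of_real (c x) * v1 x :: complex)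
        \<le> K * (3 * A1 / sqrt eps * B / sqrt r) + K * (3 * sqrt eps * B / sqrt r) + K * (A1 * B / sqrt r)"
    proof -
      have "norm (of_real (a x) * v1d x + of_real (b x) * v2d x + of_real (c x) * v1 x :: complex)
          \<le> \<bar>a x\<bar> * norm (v1d x) + \<bar>b x\<bar> * norm (v2d x) + \<bar>c x\<bar> * norm (v1 x)"
        by (metis (no_types, opaque_lifting) norm_triangle_le norm_triangle_ineq add_mono norm_mult norm_of_real order_refl)
      also have "\<dots> \<le> K * (3 * A1 / sqrt eps * B / sqrt r) + K * (3 * sqrt eps * B / sqrt r) + K * (A1 * B / sqrt r)"
        using Ka Kb Kc nv1d nv2d nv1 K0 by (intro add_mono mult_mono) auto
      finally show ?thesis .
    qed
    have n2: "norm (of_real s * v2d x + of_real (1 / eps) * v1 x + of_real (d x) * v2 x :: complex)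
        \<le> K * (3 * sqrt eps * B / sqrt r) + (1 / eps) * (A1 * B / sqrt r) + K * (B / sqrt r)"
    proof -
      have "norm (of_real s * v2d x + of_real (1 / eps) * v1 x + of_real (d x) * v2 x :: complex)
          \<le> \<bar>s\<bar> * norm (v2d x) + \<bar>1 / eps\<bar> * norm (v1 x) + \<bar>d x\<bar> * norm (v2 x)"
        by (metis (no_types, opaque_lifting) norm_triangle_le norm_triangle_ineq add_mono norm_mult norm_of_real order_refl)
      also have "\<dots> \<le> K * (3 * sqrt eps * B / sqrt r) + (1 / eps) * (A1 * B / sqrt r) + K * (B / sqrt r)"
        using Ks Kd nv2d nv1 nv2 K0 eps by (intro add_mono mult_mono) auto
      finally show ?thesis .
    qed
    have "norm (L1a eps s a b c d u x) \<le>
        (K * (3 * A1 / sqrt eps * B / sqrt r) + K * (3 * sqrt eps * B / sqrt r) + K * (A1 * B / sqrt r))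
      + (K * (3 * sqrt eps * B / sqrt r) + (1 / eps) * (A1 * B / sqrt r) + K * (B / sqrt r))"
      unfolding L by (rule order_trans[OF norm_Pair_le add_mono[OF n1 n2]])
    also have "\<dots> = (K * (3 * A1 / sqrt eps) + K * (3 * sqrt eps) + K * A1 + K * (3 * sqrt eps) + A1 / eps + K) * B / sqrt r"
      using arith_CC[of "sqrt r" eps K "3 * A1 / sqrt eps" B "3 * sqrt eps" A1] srpos eps by simp
    also have "\<dots> = CC eps K KD * B / sqrt r" by (simp add: CC_def A1_def)
    finally show ?thesis .
  qed
  ultimately show ?thesis unfolding B_def r_def by blast
qed



lemma bdd_cont_bound: "bdd_cont h \<Longrightarrow> \<exists>K\<ge>0. \<forall>x. \<bar>h x\<bar> \<le> K"
  unfolding bdd_cont_def bounded_iff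
  by (metis (no_types, lifting) abs_ge_zero order_trans rangeI real_norm_def)

theorem propositionA3:
  fixes eps chi s :: real and phi g U V :: "real \<Rightarrow> real"
  assumes "eps > 0" and "chi > 0"
    and "\<forall>x. phi differentiable at x" and "\<forall>x. g differentiable at x"
    and "traveling_pulse eps chi phi g s U V"
    and "\<forall>x. (\<lambda>y. U y * deriv phi (deriv V y)) differentiable at x"
    and "\<forall>x. (\<lambda>y. phi (deriv V y)) differentiable at x"
    and "bdd_cont (\<lambda>x. D12 chi phi U V x)"
    and "bdd_cont (\<lambda>x. M11 chi phi s V x)" and "bdd_cont (\<lambda>x. M12 chi phi U V x)"
    and "bdd_cont (\<lambda>x. N11 chi phi V x)" and "bdd_cont (\<lambda>x. N22 eps g V x)"
  shows "\<exists>R. \<forall>lam::complex. Re lam > R \<longrightarrow>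
     (\<forall>f. buc f \<longrightarrow> (\<exists>!u. buc2 u \<and> (\<forall>x. L0 eps chi phi U V u x - cscale lam (u x) = f x)))
   \<and> (\<exists>c<1. \<forall>f u. buc f \<longrightarrow> buc2 u \<longrightarrow>
          (\<forall>x. L0 eps chi phi U V u x - cscale lam (u x) = f x) \<longrightarrow>
          supn (L1 eps chi phi g s U V u) \<le> c * supn f)"
proof -
  note eps = assms(1) and chi = assms(2)
  obtain KD where KD: "\<forall>x. \<bar>D12 chi phi U V x\<bar> \<le> KD" using bdd_cont_bound[OF assms(8)] by blast
  obtain K1 where K1: "K1 \<ge> 0" "\<forall>x. \<bar>M11 chi phi s V x\<bar> \<le> K1" using bdd_cont_bound[OF assms(9)] by blast
  obtain K2 where K2: "K2 \<ge> 0" "\<forall>x. \<bar>M12 chi phi U V x\<bar> \<le> K2" using bdd_cont_bound[OF assms(10)] by blast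
  obtain K3 where K3: "K3 \<ge> 0" "\<forall>x. \<bar>N11 chi phi V x\<bar> \<le> K3" using bdd_cont_bound[OF assms(11)] by blast
  obtain K4 where K4: "K4 \<ge> 0" "\<forall>x. \<bar>N22 eps g V x\<bar> \<le> K4" using bdd_cont_bound[OF assms(12)] by blast
  define K where "K = K1 + K2 + K3 + K4 + \<bar>s\<bar>"
  have sK: "0 \<le> \<bar>s\<bar>" by simp
  have Ka: "\<forall>x. \<bar>M11 chi phi s V x\<bar> \<le> K"
  proof
    fix x show "\<bar>M11 chi phi s V x\<bar> \<le> K" using K1(2)[rule_format, of x] K2(1) K3(1) K4(1) sK unfolding K_def by linarith
  qed
  have Kb: "\<forall>x. \<bar>M12 chi phi U V x\<bar> \<le> K"
  proof
    fix x show "\<bar>M12 chi phi U V x\<bar> \<le> K" using K2(2)[rule_format, of x] K1(1) K3(1) K4(1) sK unfolding K_def by linarith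
  qed
  have Kc: "\<forall>x. \<bar>N11 chi phi V x\<bar> \<le> K"
  proof
    fix x show "\<bar>N11 chi phi V x\<bar> \<le> K" using K3(2)[rule_format, of x] K1(1) K2(1) K4(1) sK unfolding K_def by linarith
  qed
  have Kd: "\<forall>x. \<bar>N22 eps g V x\<bar> \<le> K"
  proof
    fix x show "\<bar>N22 eps g V x\<bar> \<le> K" using K4(2)[rule_format, of x] K1(1) K2(1) K3(1) sK unfolding K_def by linarith
  qed
  have Ks: "\<bar>s\<bar> \<le> K" using K1(1) K2(1) K3(1) K4(1) unfolding K_def by linarith
  define P where "P = (\<lambda>y. U y * deriv phi (deriv V y))"
  have Pd: "\<forall>x. (P has_vector_derivative deriv P x) (at x)"
    using assms(6) unfolding P_def
    by (simp add: DERIV_deriv_iff_real_differentiable has_real_derivative_iff_has_vector_derivative[symmetric])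
  have Pb: "\<forall>x. norm (deriv P x) \<le> K2 / chi"
  proof
    fix x
    have "M12 chi phi U V x = - chi * deriv P x" by (simp add: M12_def P_def)
    then have "chi * \<bar>deriv P x\<bar> \<le> K2" using K2(2)[rule_format, of x] chi by (simp add: abs_mult)
    then show "norm (deriv P x) \<le> K2 / chi" using chi by (simp add: field_simps)
  qed
  have "uniformly_continuous_on UNIV (\<lambda>x. (- chi) * P x)"
    by (rule uniformly_continuous_on_cmul_left[OF lipschitz_uc[OF Pd Pb]])
  moreover have "(\<lambda>x. (- chi) * P x) = D12 chi phi U V" by (auto simp: D12_def P_def)
  ultimately have Duc: "uniformly_continuous_on UNIV (D12 chi phi U V)" by simp
  have L0e: "L0 eps chi phi U V u x = L0a eps (D12 chi phi U V) u x" for u x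
    by (simp add: L0_def L0a_def D11_def D22_def)
  have L1e: "L1 eps chi phi g s U V u x = L1a eps s (M11 chi phi s V) (M12 chi phi U V) (N11 chi phi V) (N22 eps g V) u x" for u x
    by (simp add: L1_def L1a_def)
  define C where "C = CC eps K KD"
  show ?thesis
  proof (rule exI[of _ "max 1 (4 * C^2)"], rule allI, rule impI, rule conjI)
    fix lam :: complex assume lamR: "max 1 (4 * C^2) < Re lam"
    have lam1: "1 \<le> Re lam" and lam0: "0 < Re lam" using lamR by auto
    have "sqrt (4 * C^2) \<le> sqrt (Re lam)" using lamR by (intro real_sqrt_le_mono) auto
    then have Csq: "2 * C \<le> sqrt (Re lam)" by (simp add: real_sqrt_mult)
    note ex = core_exist[OF eps lam1 Duc KD Ka Kb Kc Kd Ks]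
    note un = core_unique[OF eps lam0]
    show "\<forall>f. buc f \<longrightarrow> (\<exists>!u. buc2 u \<and> (\<forall>x. L0 eps chi phi U V u x - cscale lam (u x) = f x))"
    proof (intro allI impI)
      fix f assume f: "buc f"
      obtain u where u: "buc2 u" "\<forall>x. L0a eps (D12 chi phi U V) u x - cscale lam (u x) = f x"
        using ex[OF f] by blast
      show "\<exists>!u. buc2 u \<and> (\<forall>x. L0 eps chi phi U V u x - cscale lam (u x) = f x)"
      proof (rule ex1I[of _ u])
        show "buc2 u \<and> (\<forall>x. L0 eps chi phi U V u x - cscale lam (u x) = f x)" using u by (simp add: L0e)
        fix v assume "buc2 v \<and> (\<forall>x. L0 eps chi phi U V v x - cscale lam (v x) = f x)"
        then show "v = u" using un[OF _ _ u] by (simp add: L0e)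
      qed
    qed
    show "\<exists>c<1. \<forall>f u. buc f \<longrightarrow> buc2 u \<longrightarrow>
          (\<forall>x. L0 eps chi phi U V u x - cscale lam (u x) = f x) \<longrightarrow>
          supn (L1 eps chi phi g s U V u) \<le> c * supn f"
    proof (intro exI[of _ "1/2"] conjI allI impI)
      fix f u assume f: "buc f" and u: "buc2 u" and eq: "\<forall>x. L0 eps chi phi U V u x - cscale lam (u x) = f x"
      obtain w where w: "buc2 w" "\<forall>x. L0a eps (D12 chi phi U V) w x - cscale lam (w x) = f x"
        "\<forall>x. norm (L1a eps s (M11 chi phi s V) (M12 chi phi U V) (N11 chi phi V) (N22 eps g V) w x) \<le> C * supn f / sqrt (Re lam)"
        using ex[OF f] unfolding C_def by blast
      have "u = w" using un[OF u _ w(1,2)] eq by (simp add: L0e)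
      have S0: "0 \<le> supn f" using supn_ge[of f 0] f norm_ge_zero[of "f 0"] unfolding buc_def by linarith
      have sq: "0 < sqrt (Re lam)" using lam0 by simp
      have "C * supn f / sqrt (Re lam) \<le> (sqrt (Re lam) / 2) * supn f / sqrt (Re lam)"
        using Csq S0 sq by (intro divide_right_mono mult_right_mono) auto
      also have "\<dots> = 1 / 2 * supn f" using sq by simp
      finally have hb: "C * supn f / sqrt (Re lam) \<le> 1 / 2 * supn f" .
      have "\<forall>x. norm (L1 eps chi phi g s U V u x) \<le> 1 / 2 * supn f"
        unfolding L1e \<open>u = w\<close> using w(3) hb order_trans by blast
      then show "supn (L1 eps chi phi g s U V u) \<le> 1 / 2 * supn f" by (rule supn_le)
    qed simp
  qed
qed


end
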